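(* Let $G$ and $H$ be finitely generated groups and let $f:G\to H$ be a surjective homomorphism with finite kernel. For every generating $n$-tuple $S=(g_1,\dots,g_n)$ of $G$, if $\Gamma_n(G,S)$ has exponential growth then $\Gamma_n(H,f(S))$ has exponential growth, where $f(S)=(f(g_1),\dots,f(g_n))$. In particular, if $G$ has exponential Nielsen growth, then $H$ has exponential Nielsen growth.
   Context: For a group $G$, a generating $n$-tuple is $(g_1,\dots,g_n)\in G^n$ with $G=\langle g_1,\dots,g_n\rangle$. The product replacement graph $\Gamma_n(G)$ has vertices the generating $n$-tuples, with edges from $(g_1,\dots,g_n)$ to each tuple obtained by replacing $g_j$ by $g_jg_i^{\pm1}$ or $g_i^{\pm1}g_j$, for every ordered pair $i\neq j$. For $S\in\Gamma_n(G)$, $\Gamma_n(G,S)$ is the connected component of $\Gamma_n(G)$ containing $S$ (more generally $\Gamma_{n+m}(G,S)$ is the component containing $S$ padded with $m$ identity entries). For a graph $\Gamma$ and vertex $v$, $B_\Gamma(v,r)$ is the set of vertices at path distance at most $r$ from $v$; a graph has exponential growth from $v$ if $|B_\Gamma(v,r)|\ge\alpha^r$ for some $\alpha>1$ and all sufficiently large $r$; a connected graph has exponential growth if it has exponential growth from some (equivalently every) vertex. $G$ has exponential Nielsen growth if $\Gamma_n(G,S)$ has exponential growth for some $n$ and some generating $n$-tuple $S$. *)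

theory Defs
  imports Complex_Main "HOL-Algebra.Algebra"
begin

definition fin_gen_group :: "('a, 'm) monoid_scheme \<Rightarrow> bool" where
  "fin_gen_group G \<longleftrightarrow> (\<exists>A. finite A \<and> A \<subseteq> carrier G \<and> generate G A = carrier G)"

definition gen_tuple :: "('a, 'm) monoid_scheme \<Rightarrow> nat \<Rightarrow> 'a list \<Rightarrow> bool" where
  "gen_tuple G n xs \<longleftrightarrow> length xs = n \<and> set xs \<subseteq> carrier G \<and> generate G (set xs) = carrier G"

definition nielsen_move :: "('a, 'm) monoid_scheme \<Rightarrow> 'a list \<Rightarrow> 'a list \<Rightarrow> bool" where
  "nielsen_move G xs ys \<longleftrightarrow>
     (\<exists>i j. i < length xs \<and> j < length xs \<and> i \<noteq> j \<and>
        (ys = xs[j := xs!j \<otimes>\<^bsub>G\<^esub> xs!i] \<or>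
         ys = xs[j := xs!j \<otimes>\<^bsub>G\<^esub> inv\<^bsub>G\<^esub> (xs!i)] \<or>
         ys = xs[j := xs!i \<otimes>\<^bsub>G\<^esub> xs!j] \<or>
         ys = xs[j := inv\<^bsub>G\<^esub> (xs!i) \<otimes>\<^bsub>G\<^esub> xs!j]))"

definition pr_edge :: "('a, 'm) monoid_scheme \<Rightarrow> nat \<Rightarrow> ('a list \<times> 'a list) set" where
  "pr_edge G n = {(xs, ys). gen_tuple G n xs \<and> gen_tuple G n ys \<and> nielsen_move G xs ys}"

definition pr_component :: "('a, 'm) monoid_scheme \<Rightarrow> nat \<Rightarrow> 'a list \<Rightarrow> 'a list set" where
  "pr_component G n S = {T. (S, T) \<in> (pr_edge G n)\<^sup>*}"

definition pr_ball :: "('a, 'm) monoid_scheme \<Rightarrow> nat \<Rightarrow> 'a list \<Rightarrow> nat \<Rightarrow> 'a list set" where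
  "pr_ball G n v r = {w. \<exists>k\<le>r. (v, w) \<in> (pr_edge G n) ^^ k}"

definition exp_growth_from :: "('a, 'm) monoid_scheme \<Rightarrow> nat \<Rightarrow> 'a list \<Rightarrow> bool" where
  "exp_growth_from G n v \<longleftrightarrow>
     (\<exists>\<alpha>::real. \<alpha> > 1 \<and> (\<exists>N. \<forall>r\<ge>N. \<alpha> ^ r \<le> real (card (pr_ball G n v r))))"

text \<open>Gamma_n(G,S) has exponential growth (from some, equivalently every, vertex).\<close>
definition pr_exp_growth :: "('a, 'm) monoid_scheme \<Rightarrow> nat \<Rightarrow> 'a list \<Rightarrow> bool" where
  "pr_exp_growth G n S \<longleftrightarrow> (\<exists>v \<in> pr_component G n S. exp_growth_from G n v)"

definition exp_nielsen_growth :: "('a, 'm) monoid_scheme \<Rightarrow> bool" where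
  "exp_nielsen_growth G \<longleftrightarrow> (\<exists>n S. gen_tuple G n S \<and> pr_exp_growth G n S)"

end

theory Submission imports Defs begin

lemma finite_nbr: "finite (pr_edge H n `` {xs})"
proof -
  let ?U = "\<Union>i\<in>{..<length xs}. \<Union>j\<in>{..<length xs}.
     {xs[j := xs!j \<otimes>\<^bsub>H\<^esub> xs!i], xs[j := xs!j \<otimes>\<^bsub>H\<^esub> inv\<^bsub>H\<^esub> (xs!i)],
      xs[j := xs!i \<otimes>\<^bsub>H\<^esub> xs!j], xs[j := inv\<^bsub>H\<^esub> (xs!i) \<otimes>\<^bsub>H\<^esub> xs!j]}"
  have "pr_edge H n `` {xs} \<subseteq> ?U"
    unfolding pr_edge_def nielsen_move_def by blast
  moreover have "finite ?U" by auto
  ultimately show ?thesis by (rule finite_subset)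
qed

lemma finite_pow_img: "finite ((pr_edge H n ^^ k) `` {v})"
proof (induction k)
  case 0 then show ?case by simp
next
  case (Suc k)
  have "(pr_edge H n ^^ Suc k) `` {v} = pr_edge H n `` ((pr_edge H n ^^ k) `` {v})"
    by (simp add: relcomp_Image)
  also have "\<dots> = (\<Union>x\<in>(pr_edge H n ^^ k) `` {v}. pr_edge H n `` {x})"
    by (rule Image_eq_UN)
  finally show ?case using Suc by (simp add: finite_nbr)
qed

lemma finite_ball: "finite (pr_ball H n v r)"
proof -
  have "pr_ball H n v r = (\<Union>k\<in>{..r}. (pr_edge H n ^^ k) `` {v})"
    unfolding pr_ball_def by auto
  then show ?thesis by (simp add: finite_pow_img)
qed

lemma pow_gen: "gen_tuple G n w" if a: "(v, w) \<in> pr_edge G n ^^ k" "gen_tuple G n v"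
proof (cases k)
  case 0 then show ?thesis using a by simp
next
  case (Suc m)
  then obtain z where "(z, w) \<in> pr_edge G n" using a(1) Suc by (meson relpow_Suc_E)
  then show ?thesis unfolding pr_edge_def by simp
qed

lemma rt_gen: "gen_tuple G n w" if a: "(v, w) \<in> (pr_edge G n)\<^sup>*" "gen_tuple G n v"
proof (cases "v = w")
  case True then show ?thesis using a by simp
next
  case False
  then obtain z where "(z, w) \<in> pr_edge G n" using a(1) False by (meson rtranclE)
  then show ?thesis unfolding pr_edge_def by simp
qed

context group_hom
begin

lemma move_map:
  assumes "set xs \<subseteq> carrier G" "nielsen_move G xs ys"
  shows "nielsen_move H (map h xs) (map h ys)"
proof -
  from assms(2) obtain i j where ij: "i < length xs" "j < length xs" "i \<noteq> j"
    and c: "ys = xs[j := xs!j \<otimes>\<^bsub>G\<^esub> xs!i] \<or>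
         ys = xs[j := xs!j \<otimes>\<^bsub>G\<^esub> inv\<^bsub>G\<^esub> (xs!i)] \<or>
         ys = xs[j := xs!i \<otimes>\<^bsub>G\<^esub> xs!j] \<or>
         ys = xs[j := inv\<^bsub>G\<^esub> (xs!i) \<otimes>\<^bsub>G\<^esub> xs!j]"
    unfolding nielsen_move_def by blast
  have ci: "xs!i \<in> carrier G" and cj: "xs!j \<in> carrier G" using ij assms(1) nth_mem by blast+
  have ic: "inv (xs!i) \<in> carrier G" using ci by simp
  from c show ?thesis
  proof (elim disjE)
    assume ys: "ys = xs[j := xs!j \<otimes> xs!i]"
    show ?thesis unfolding nielsen_move_def
      by (rule exI[of _ i], rule exI[of _ j]) (simp add: ys ij ci cj map_update)
  next
    assume ys: "ys = xs[j := xs!j \<otimes> inv (xs!i)]"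
    show ?thesis unfolding nielsen_move_def
      by (rule exI[of _ i], rule exI[of _ j]) (simp add: ys ij ci cj ic map_update)
  next
    assume ys: "ys = xs[j := xs!i \<otimes> xs!j]"
    show ?thesis unfolding nielsen_move_def
      by (rule exI[of _ i], rule exI[of _ j]) (simp add: ys ij ci cj map_update)
  next
    assume ys: "ys = xs[j := inv (xs!i) \<otimes> xs!j]"
    show ?thesis unfolding nielsen_move_def
      by (rule exI[of _ i], rule exI[of _ j]) (simp add: ys ij ci cj ic map_update)
  qed
qed

lemma gen_map:
  assumes "h ` carrier G = carrier H" "gen_tuple G n xs"
  shows "gen_tuple H n (map h xs)"
proof -
  have s: "set xs \<subseteq> carrier G" and g: "generate G (set xs) = carrier G" and l: "length xs = n"
    using assms(2) unfolding gen_tuple_def by auto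
  have "generate H (set (map h xs)) = h ` generate G (set xs)"
    using generate_img[OF s] by simp
  then show ?thesis using g l s assms(1) unfolding gen_tuple_def by auto
qed

lemma edge_map:
  assumes "h ` carrier G = carrier H" "(xs, ys) \<in> pr_edge G n"
  shows "(map h xs, map h ys) \<in> pr_edge H n"
proof -
  have a: "gen_tuple G n xs" "gen_tuple G n ys" "nielsen_move G xs ys"
    using assms(2) unfolding pr_edge_def by auto
  have "set xs \<subseteq> carrier G" using a(1) unfolding gen_tuple_def by simp
  then show ?thesis using a gen_map[OF assms(1)] move_map unfolding pr_edge_def by simp
qed

lemma pow_map:
  assumes "h ` carrier G = carrier H"
  shows "(xs, ys) \<in> pr_edge G n ^^ k \<Longrightarrow> (map h xs, map h ys) \<in> pr_edge H n ^^ k"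
proof (induction k arbitrary: ys)
  case 0 then show ?case by simp
next
  case (Suc k)
  then obtain z where "(xs, z) \<in> pr_edge G n ^^ k" "(z, ys) \<in> pr_edge G n" by auto
  then show ?case using Suc.IH edge_map[OF assms] by (meson relpow_Suc_I)
qed

lemma rt_map:
  assumes "h ` carrier G = carrier H"
  shows "(xs, ys) \<in> (pr_edge G n)\<^sup>* \<Longrightarrow> (map h xs, map h ys) \<in> (pr_edge H n)\<^sup>*"
proof (induction rule: rtrancl_induct)
  case base then show ?case by simp
next
  case (step y z) then show ?case using edge_map[OF assms] by (meson rtrancl.rtrancl_into_rtrancl)
qed

lemma fiber:
  assumes "finite (kernel G H h)"
  shows "finite {xs. length xs = n \<and> set xs \<subseteq> carrier G \<and> map h xs = ys} \<and>
         card {xs. length xs = n \<and> set xs \<subseteq> carrier G \<and> map h xs = ys} \<le> card (kernel G H h) ^ n"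
proof (cases "{xs. length xs = n \<and> set xs \<subseteq> carrier G \<and> map h xs = ys} = {}")
  case True then show ?thesis unfolding True by simp
next
  case False
  let ?F = "{xs. length xs = n \<and> set xs \<subseteq> carrier G \<and> map h xs = ys}"
  let ?K = "{zs. set zs \<subseteq> kernel G H h \<and> length zs = n}"
  from False obtain x0 where x0: "x0 \<in> ?F" by blast
  define \<phi> where "\<phi> xs = map2 (\<lambda>a b. inv a \<otimes> b) x0 xs" for xs
  have nth_phi: "\<phi> xs ! i = inv (x0!i) \<otimes> xs!i" if "xs \<in> ?F" "i < length xs" for xs i
    using that x0 by (simp add: \<phi>_def)
  have inj: "inj_on \<phi> ?F"
  proof (rule inj_onI)
    fix xs xs' assume a: "xs \<in> ?F" "xs' \<in> ?F" "\<phi> xs = \<phi> xs'"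
    show "xs = xs'"
    proof (rule nth_equalityI)
      show "length xs = length xs'" using a by simp
      fix i assume i: "i < length xs"
      have "\<phi> xs ! i = \<phi> xs' ! i" using a by simp
      then have "inv (x0!i) \<otimes> xs!i = inv (x0!i) \<otimes> xs'!i"
        using nth_phi[OF a(1) i] nth_phi[OF a(2)] i a(1,2) by simp
      moreover have "x0!i \<in> carrier G" "xs!i \<in> carrier G" "xs'!i \<in> carrier G"
        using i a x0 by (auto intro!: subsetD[OF _ nth_mem])
      ultimately show "xs!i = xs'!i" by simp
    qed
  qed
  have img: "\<phi> ` ?F \<subseteq> ?K"
  proof
    fix zs assume "zs \<in> \<phi> ` ?F"
    then obtain xs where xs: "xs \<in> ?F" "zs = \<phi> xs" by blast
    have len: "length zs = n" using xs x0 by (simp add: \<phi>_def)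
    have "zs!i \<in> kernel G H h" if i: "i < n" for i
    proof -
      have c: "x0!i \<in> carrier G" "xs!i \<in> carrier G"
        using i xs x0 by (auto intro!: subsetD[OF _ nth_mem])
      have e: "h (x0!i) = ys!i" "h (xs!i) = ys!i"
        using i xs x0 by (metis (mono_tags, lifting) mem_Collect_eq nth_map)+
      have "zs!i = inv (x0!i) \<otimes> xs!i" using xs i nth_phi by simp
      then show ?thesis using c e unfolding kernel_def
        by (simp add: H.l_inv_ex) (metis H.l_inv hom_closed)
    qed
    then show "zs \<in> ?K" using len by (auto simp: in_set_conv_nth)
  qed
  have fK: "finite ?K" using finite_lists_length_eq[OF assms] by simp
  have "finite ?F" using inj_on_finite[OF inj img fK] .
  moreover have "card ?F \<le> card ?K" using card_inj_on_le[OF inj img fK] .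
  ultimately show ?thesis using card_lists_length_eq[OF assms] by simp
qed

end

lemma growth_transfer:
  fixes \<alpha> c :: real and a b :: "nat \<Rightarrow> real"
  assumes "\<alpha> > 1" "\<forall>r\<ge>N. \<alpha> ^ r \<le> a r" "\<forall>r. a r \<le> c * b r" "c \<ge> 0"
  shows "\<exists>\<beta>::real. \<beta> > 1 \<and> (\<exists>N. \<forall>r\<ge>N. \<beta> ^ r \<le> b r)"
proof -
  define \<beta> where "\<beta> = sqrt \<alpha>"
  have b1: "\<beta> > 1" using assms(1) by (simp add: \<beta>_def)
  have bb: "\<beta> * \<beta> = \<alpha>" using assms(1) by (simp add: \<beta>_def)
  obtain M where M: "c < \<beta> ^ M" using real_arch_pow[OF b1] by blast
  have "\<beta> ^ r \<le> b r" if r: "r \<ge> max N M" for r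
  proof -
    have "\<beta> ^ M \<le> \<beta> ^ r" using b1 r by (intro power_increasing) auto
    then have "c \<le> \<beta> ^ r" using M by linarith
    have pos: "\<beta> ^ r > 0" using b1 by simp
    have "\<beta> ^ r * \<beta> ^ r = \<alpha> ^ r" using bb by (metis power_mult_distrib)
    also have "\<dots> \<le> a r" using assms(2) r by simp
    also have "\<dots> \<le> c * b r" using assms(3) by simp
    finally have 1: "\<beta> ^ r * \<beta> ^ r \<le> c * b r" .
    show ?thesis
    proof (rule ccontr)
      assume "\<not> ?thesis"
      then have "b r < \<beta> ^ r" by simp
      then have "c * b r \<le> \<beta> ^ r * b r"
        using \<open>c \<le> \<beta> ^ r\<close> assms(4) 1 pos
        by (smt (verit) mult_right_mono mult_nonneg_nonneg zero_less_mult_iff)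
      also have "\<dots> < \<beta> ^ r * \<beta> ^ r" using \<open>b r < \<beta> ^ r\<close> pos by simp
      finally show False using 1 by simp
    qed
  qed
  then show ?thesis using b1 by blast
qed

theorem proposition3p6:
  fixes G :: "('a, 'm) monoid_scheme" and H :: "('b, 'n) monoid_scheme"
    and f :: "'a \<Rightarrow> 'b"
  assumes "group G" and "group H"
    and "fin_gen_group G" and "fin_gen_group H"
    and "f \<in> hom G H" and "f ` carrier G = carrier H"
    and "finite (kernel G H f)"
  shows "(\<forall>n S. gen_tuple G n S \<and> pr_exp_growth G n S \<longrightarrow> pr_exp_growth H n (map f S))
         \<and> (exp_nielsen_growth G \<longrightarrow> exp_nielsen_growth H)"
proof -
  interpret gh: group_hom G H f
    using assms(1,2,5) by (simp add: group_hom_def group_hom_axioms_def)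
  have P1: "pr_exp_growth H n (map f S)" if S: "gen_tuple G n S" and gr: "pr_exp_growth G n S" for n S
  proof -
    from gr obtain v \<alpha> N where v: "v \<in> pr_component G n S" and a1: "\<alpha> > 1"
      and aN: "\<forall>r\<ge>N. \<alpha> ^ r \<le> real (card (pr_ball G n v r))"
      unfolding pr_exp_growth_def exp_growth_from_def by blast
    have vS: "(S, v) \<in> (pr_edge G n)\<^sup>*" using v unfolding pr_component_def by simp
    have vg: "gen_tuple G n v" using rt_gen[OF vS S] .
    have fv: "map f v \<in> pr_component H n (map f S)"
      using gh.rt_map[OF assms(6) vS] unfolding pr_component_def by simp
    define c where "c = card (kernel G H f) ^ n"
    define F where "F ys = {xs. length xs = n \<and> set xs \<subseteq> carrier G \<and> map f xs = ys}" for ys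
    have bound: "card (pr_ball G n v r) \<le> c * card (pr_ball H n (map f v) r)" for r
    proof -
      let ?BH = "pr_ball H n (map f v) r"
      have sub: "pr_ball G n v r \<subseteq> (\<Union>y\<in>?BH. F y)"
      proof
        fix w assume "w \<in> pr_ball G n v r"
        then obtain k where k: "k \<le> r" "(v, w) \<in> pr_edge G n ^^ k" unfolding pr_ball_def by blast
        have "gen_tuple G n w" using pow_gen[OF k(2) vg] .
        then have "w \<in> F (map f w)" unfolding F_def gen_tuple_def by simp
        moreover have "map f w \<in> ?BH" using gh.pow_map[OF assms(6) k(2)] k(1)
          unfolding pr_ball_def by blast
        ultimately show "w \<in> (\<Union>y\<in>?BH. F y)" by blast
      qed
      have fin: "finite (\<Union>y\<in>?BH. F y)"
        using finite_ball gh.fiber[OF assms(7)] unfolding F_def by blast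
      have "card (pr_ball G n v r) \<le> card (\<Union>y\<in>?BH. F y)" using card_mono[OF fin sub] .
      also have "\<dots> \<le> (\<Sum>y\<in>?BH. card (F y))" using card_UN_le[OF finite_ball] .
      also have "\<dots> \<le> (\<Sum>y\<in>?BH. c)"
        by (rule sum_mono) (use gh.fiber[OF assms(7)] in \<open>simp add: F_def c_def\<close>)
      also have "\<dots> = c * card ?BH" by simp
      finally show ?thesis .
    qed
    have "\<exists>\<beta>::real. \<beta> > 1 \<and> (\<exists>N. \<forall>r\<ge>N. \<beta> ^ r \<le> real (card (pr_ball H n (map f v) r)))"
    proof (rule growth_transfer[OF a1 aN])
      show "\<forall>r. real (card (pr_ball G n v r)) \<le> real c * real (card (pr_ball H n (map f v) r))"
        using bound by (metis of_nat_le_iff of_nat_mult)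
    qed simp
    then show ?thesis using fv unfolding pr_exp_growth_def exp_growth_from_def by blast
  qed
  have P2: "exp_nielsen_growth H" if "exp_nielsen_growth G"
  proof -
    from that obtain n S where "gen_tuple G n S" "pr_exp_growth G n S"
      unfolding exp_nielsen_growth_def by blast
    then show ?thesis using P1 gh.gen_map[OF assms(6)] unfolding exp_nielsen_growth_def by blast
  qed
  show ?thesis using P1 P2 by blast
qed

end
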